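(* Let $u=u_1u_2\cdots u_N$ be a universal cycle for $n$-permutations, possibly containing $\Diamond$ (as defined in the context), and let $n-k$ be its diamondicity. Then (i) $N=k!$. Moreover, letting $c=\gcd(n,N)$: (ii) the occurrences of $\Diamond$ in $u$ are $c$-periodic, i.e., for every $i$, $u_i=\Diamond$ if and only if $u_{i+c}=\Diamond$ (indices modulo $N$); and (iii) $\frac{n}{c}$ divides $n-k$; in particular $c\neq 1$ whenever $1\leq k\leq n-1$.
   Context: An $n$-permutation is a permutation of $\{1,\ldots,n\}$. For a word $w$ of distinct numbers, $\mathrm{red}(w)$ is obtained by replacing the $i$-th smallest letter by $i$. Let $\Diamond$ be a symbol not among the integers. A word $f=f_1\cdots f_n$ over the positive integers together with $\Diamond$, whose integer letters are pairwise distinct, covers an $n$-permutation $\pi$ if one can substitute real numbers for the occurrences of $\Diamond$ (independently) so that the resulting word has $n$ pairwise distinct entries and reduces to $\pi$; equivalently, $f_i<f_j\iff\pi_i<\pi_j$ for all positions $i,j$ holding integers. A universal cycle for $n$-permutations, possibly containing $\Diamond$, is a cyclic word $u_1\cdots u_N$ with $N\geq n$ over this alphabet, indices read modulo $N$, such that each of its $N$ cyclic factors $u_iu_{i+1}\cdots u_{i+n-1}$ ($1\leq i\leq N$) has pairwise distinct integer letters and every $n$-permutation is covered by exactly one of these factors. The number of $\Diamond$'s in a cyclic factor of length $n$ is the same for all such factors; this common number is called the diamondicity of $u$. *)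

theory Defs
  imports Complex_Main
begin

text \<open>Letters: \<open>None\<close> is the symbol Diamond, \<open>Some x\<close> (with \<open>x > 0\<close>) a positive integer.
  A cyclic word of length N is a list of length N, read cyclically.\<close>

type_synonym letter = "nat option"

definition nperms :: "nat \<Rightarrow> nat list set" where
  "nperms n = {p. distinct p \<and> set p = {1..n}}"

definition cfactor :: "letter list \<Rightarrow> nat \<Rightarrow> nat \<Rightarrow> letter list" where
  "cfactor u i n = map (\<lambda>j. u ! ((i + j) mod length u)) [0..<n]"

text \<open>f covers \<pi>: substituting reals for the diamonds (independently) yields a word
  with pairwise distinct entries whose reduction is \<pi> (red replaces the i-th smallest
  letter by i, i.e. each entry by its rank).\<close>
definition covers :: "letter list \<Rightarrow> nat list \<Rightarrow> bool" where
  "covers f \<pi> \<longleftrightarrow> length f = length \<pi> \<and>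
     (\<exists>g :: nat \<Rightarrow> real.
        let w = (\<lambda>i. case f ! i of None \<Rightarrow> g i | Some x \<Rightarrow> real x) in
        inj_on w {..<length f} \<and>
        (\<forall>i<length f. \<pi> ! i = card {j \<in> {..<length f}. w j \<le> w i}))"

definition ucycle :: "nat \<Rightarrow> letter list \<Rightarrow> bool" where
  "ucycle n u \<longleftrightarrow> length u \<ge> n \<and>
     (\<forall>x. Some x \<in> set u \<longrightarrow> x > 0) \<and>
     (\<forall>i < length u. \<forall>j1<n. \<forall>j2<n. \<forall>a.
         j1 \<noteq> j2 \<longrightarrow> cfactor u i n ! j1 = Some a \<longrightarrow> cfactor u i n ! j2 \<noteq> Some a) \<and>
     (\<forall>\<pi> \<in> nperms n. \<exists>!i. i < length u \<and> covers (cfactor u i n) \<pi>)"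

text \<open>Diamondicity: number of Diamonds in a cyclic factor of length n (it is the same
  for all factors; we take the one starting at the first position).\<close>
definition diamondicity :: "nat \<Rightarrow> letter list \<Rightarrow> nat" where
  "diamondicity n u = count_list (cfactor u 0 n) None"

end

theory Submission
  imports Defs
begin


definition rk :: "(nat \<Rightarrow> real) \<Rightarrow> nat \<Rightarrow> nat list" where
  "rk v n = map (\<lambda>i. card {j \<in> {..<n}. v j \<le> v i}) [0..<n]"

lemma rk_length[simp]: "length (rk v n) = n"
  by (simp add: rk_def)

lemma rk_nth: "i < n \<Longrightarrow> rk v n ! i = card {j \<in> {..<n}. v j \<le> v i}"
  by (simp add: rk_def)

lemma rk_less:
  assumes "inj_on v {..<n}" "i < n" "j < n"
  shows "rk v n ! i < rk v n ! j \<longleftrightarrow> v i < v j"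
proof
  assume lt: "v i < v j"
  have sub: "{l \<in> {..<n}. v l \<le> v i} \<subseteq> {l \<in> {..<n}. v l \<le> v j}"
    using lt by auto
  have "j \<in> {l \<in> {..<n}. v l \<le> v j}" using assms(3) by simp
  moreover have "j \<notin> {l \<in> {..<n}. v l \<le> v i}" using lt by simp
  ultimately have "{l \<in> {..<n}. v l \<le> v i} \<subset> {l \<in> {..<n}. v l \<le> v j}"
    using sub by blast
  then have "card {l \<in> {..<n}. v l \<le> v i} < card {l \<in> {..<n}. v l \<le> v j}"
    by (rule psubset_card_mono[rotated]) simp
  then show "rk v n ! i < rk v n ! j"
    using assms by (simp add: rk_nth)
next
  assume a: "rk v n ! i < rk v n ! j"
  show "v i < v j"
  proof (rule ccontr)
    assume "\<not> v i < v j"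
    then have "{l \<in> {..<n}. v l \<le> v j} \<subseteq> {l \<in> {..<n}. v l \<le> v i}"
      by auto
    then have "card {l \<in> {..<n}. v l \<le> v j} \<le> card {l \<in> {..<n}. v l \<le> v i}"
      by (rule card_mono[rotated]) simp
    then have "rk v n ! j \<le> rk v n ! i"
      using assms by (simp add: rk_nth)
    then show False using a by simp
  qed
qed

lemma rk_perm:
  assumes inj: "inj_on v {..<n}"
  shows "rk v n \<in> nperms n"
proof -
  have d: "distinct (rk v n)"
  proof (subst distinct_conv_nth, intro allI impI)
    fix i j assume "i < length (rk v n)" "j < length (rk v n)" "i \<noteq> j"
    then have ij: "i < n" "j < n" "i \<noteq> j" by auto
    then have "v i \<noteq> v j" using inj by (auto dest: inj_onD)
    then have "v i < v j \<or> v j < v i" by auto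
    then show "rk v n ! i \<noteq> rk v n ! j"
      using rk_less[OF inj ij(1) ij(2)] rk_less[OF inj ij(2) ij(1)] by auto
  qed
  have s: "set (rk v n) \<subseteq> {1..n}"
  proof
    fix x assume "x \<in> set (rk v n)"
    then obtain i where i: "i < n" "x = rk v n ! i" by (auto simp: in_set_conv_nth)
    have "i \<in> {j \<in> {..<n}. v j \<le> v i}" using i by auto
    moreover have fin: "finite {j \<in> {..<n}. v j \<le> v i}" by simp
    ultimately have "card {j \<in> {..<n}. v j \<le> v i} > 0"
      using card_gt_0_iff by blast
    then have "card {j \<in> {..<n}. v j \<le> v i} \<ge> 1" by simp
    moreover have "card {j \<in> {..<n}. v j \<le> v i} \<le> card {..<n}"
      by (rule card_mono) auto
    then have "card {j \<in> {..<n}. v j \<le> v i} \<le> n" by simp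
    ultimately show "x \<in> {1..n}" using i by (simp add: rk_nth)
  qed
  have "card (set (rk v n)) = n" using d by (simp add: distinct_card)
  then have "set (rk v n) = {1..n}"
    using s by (simp add: card_subset_eq)
  then show ?thesis using d by (simp add: nperms_def)
qed

lemma nperms_length: "\<pi> \<in> nperms n \<Longrightarrow> length \<pi> = n"
proof -
  assume "\<pi> \<in> nperms n"
  then have "distinct \<pi>" "set \<pi> = {1..n}" by (auto simp: nperms_def)
  then have "length \<pi> = card {1..n}" by (metis distinct_card)
  then show ?thesis by simp
qed

lemma perm_rk:
  assumes p: "\<pi> \<in> nperms n"
  shows "rk (\<lambda>j. real (\<pi> ! j)) n = \<pi>"
proof (rule nth_equalityI)
  have len: "length \<pi> = n" using nperms_length[OF p] .
  show "length (rk (\<lambda>j. real (\<pi> ! j)) n) = length \<pi>" using len by simp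
  fix i assume "i < length (rk (\<lambda>j. real (\<pi> ! j)) n)"
  then have i: "i < n" by simp
  have d: "distinct \<pi>" and st: "set \<pi> = {1..n}" using p by (auto simp: nperms_def)
  have "(!) \<pi> ` {j \<in> {..<n}. \<pi> ! j \<le> \<pi> ! i} = {1..\<pi> ! i}"
  proof
    show "(!) \<pi> ` {j \<in> {..<n}. \<pi> ! j \<le> \<pi> ! i} \<subseteq> {1..\<pi> ! i}"
    proof
      fix x assume "x \<in> (!) \<pi> ` {j \<in> {..<n}. \<pi> ! j \<le> \<pi> ! i}"
      then obtain j where j: "j < n" "\<pi> ! j \<le> \<pi> ! i" "x = \<pi> ! j" by auto
      then have "x \<in> set \<pi>" using len by auto
      then show "x \<in> {1..\<pi> ! i}" using j st by auto
    qed
    show "{1..\<pi> ! i} \<subseteq> (!) \<pi> ` {j \<in> {..<n}. \<pi> ! j \<le> \<pi> ! i}"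
    proof
      fix x assume x: "x \<in> {1..\<pi> ! i}"
      have "\<pi> ! i \<le> n" using st len i by (metis atLeastAtMost_iff nth_mem)
      then have "x \<in> set \<pi>" using x st by auto
      then obtain j where "j < n" "\<pi> ! j = x" using len by (auto simp: in_set_conv_nth)
      then show "x \<in> (!) \<pi> ` {j \<in> {..<n}. \<pi> ! j \<le> \<pi> ! i}" using x by auto
    qed
  qed
  moreover have "inj_on ((!) \<pi>) {j \<in> {..<n}. \<pi> ! j \<le> \<pi> ! i}"
  proof (rule inj_onI)
    fix x y assume "x \<in> {j \<in> {..<n}. \<pi> ! j \<le> \<pi> ! i}" "y \<in> {j \<in> {..<n}. \<pi> ! j \<le> \<pi> ! i}" "\<pi> ! x = \<pi> ! y"
    then show "x = y" using d len nth_eq_iff_index_eq by auto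
  qed
  ultimately have "card {j \<in> {..<n}. \<pi> ! j \<le> \<pi> ! i} = card {1..\<pi> ! i}"
    using card_image by fastforce
  then have "card {j \<in> {..<n}. \<pi> ! j \<le> \<pi> ! i} = \<pi> ! i" by simp
  then show "rk (\<lambda>j. real (\<pi> ! j)) n ! i = \<pi> ! i" using i by (simp add: rk_nth)
qed

lemma between:
  fixes L U :: "real set"
  assumes "finite L" "finite U" "\<forall>a\<in>L. \<forall>b\<in>U. a < b"
  shows "\<exists>r. (\<forall>a\<in>L. a < r) \<and> (\<forall>b\<in>U. r < b)"
proof (cases "L = {}")
  case True
  show ?thesis
  proof (cases "U = {}")
    case True with \<open>L = {}\<close> show ?thesis by auto
  next
    case False
    have "\<forall>b\<in>U. Min U - 1 < b"
    proof
      fix b assume "b \<in> U"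
      then have "Min U \<le> b" using assms(2) by simp
      then show "Min U - 1 < b" by simp
    qed
    then show ?thesis using \<open>L = {}\<close> by blast
  qed
next
  case False
  show ?thesis
  proof (cases "U = {}")
    case True
    have "\<forall>a\<in>L. a < Max L + 1"
    proof
      fix a assume "a \<in> L"
      then have "a \<le> Max L" using assms(1) by simp
      then show "a < Max L + 1" by simp
    qed
    then show ?thesis using True by blast
  next
    case U: False
    have "Max L \<in> L" "Min U \<in> U" using assms False U by auto
    then have lt: "Max L < Min U" using assms(3) by blast
    have "\<forall>a\<in>L. a < (Max L + Min U)/2"
    proof
      fix a assume "a \<in> L"
      then have "a \<le> Max L" using assms(1) by simp
      then show "a < (Max L + Min U)/2" using lt by simp
    qed
    moreover have "\<forall>b\<in>U. (Max L + Min U)/2 < b"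
    proof
      fix b assume "b \<in> U"
      then have "Min U \<le> b" using assms(2) by simp
      then show "(Max L + Min U)/2 < b" using lt by simp
    qed
    ultimately show ?thesis by blast
  qed
qed

lemma between_avoid:
  fixes L U S :: "real set"
  assumes "finite L" "finite U" "finite S" "\<forall>a\<in>L. \<forall>b\<in>U. a < b"
  shows "\<exists>r. (\<forall>a\<in>L. a < r) \<and> (\<forall>b\<in>U. r < b) \<and> r \<notin> S"
proof -
  obtain r where r: "\<forall>a\<in>L. a < r" "\<forall>b\<in>U. r < b" using between[OF assms(1,2,4)] by blast
  let ?L = "L \<union> {s \<in> S. s < r}" and ?U = "U \<union> {s \<in> S. r \<le> s}"
  have "\<forall>a\<in>?L. \<forall>b\<in>?U. a < b"
  proof (intro ballI)
    fix a b assume a: "a \<in> ?L" and b: "b \<in> ?U"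
    show "a < b"
    proof (cases "a \<in> L")
      case True
      then have "a < r" using r by blast
      then show ?thesis using b r(2) assms(4) True by auto
    next
      case False
      then have "a < r" using a by auto
      then show ?thesis using b r(2) by auto
    qed
  qed
  moreover have "finite ?L" "finite ?U" using assms by auto
  ultimately obtain r' where r': "\<forall>a\<in>?L. a < r'" "\<forall>b\<in>?U. r' < b"
    using between[of ?L ?U] by blast
  have "r' \<notin> S"
  proof
    assume "r' \<in> S"
    show False
    proof (cases "r' < r")
      case True
      then have "r' \<in> ?L" using \<open>r' \<in> S\<close> by blast
      then show False using r'(1) by blast
    next
      case False
      then have "r' \<in> ?U" using \<open>r' \<in> S\<close> by simp
      then show False using r'(2) by blast
    qed
  qed
  then show ?thesis using r' by blast
qed



lemma covers_intro:
  assumes len: "length f = n" and inj: "inj_on v {..<n}"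
    and agree: "\<And>j a. j < n \<Longrightarrow> f ! j = Some a \<Longrightarrow> v j = real a"
  shows "covers f (rk v n)"
proof -
  let ?w = "\<lambda>i. case f ! i of None \<Rightarrow> v i | Some x \<Rightarrow> real x"
  have eq: "\<And>i. i < n \<Longrightarrow> ?w i = v i"
  proof -
    fix i assume i: "i < n"
    show "?w i = v i"
    proof (cases "f ! i")
      case None then show ?thesis by simp
    next
      case (Some a) then show ?thesis using agree[OF i Some] by simp
    qed
  qed
  have "inj_on ?w {..<n}"
    using inj eq by (simp add: inj_on_def)
  moreover have "\<forall>i<n. rk v n ! i = card {j \<in> {..<n}. ?w j \<le> ?w i}"
  proof (intro allI impI)
    fix i assume i: "i < n"
    have "{j \<in> {..<n}. ?w j \<le> ?w i} = {j \<in> {..<n}. v j \<le> v i}"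
      using eq i by auto
    then show "rk v n ! i = card {j \<in> {..<n}. ?w j \<le> ?w i}"
      using i by (simp add: rk_nth)
  qed
  ultimately show ?thesis
    unfolding covers_def Let_def using len by (intro conjI exI[of _ v]) auto
qed

lemma covers_elim:
  assumes "covers f \<pi>"
  obtains v where "inj_on v {..<length f}"
    "\<And>j a. j < length f \<Longrightarrow> f ! j = Some a \<Longrightarrow> v j = real a"
    "\<pi> = rk v (length f)"
proof -
  obtain g where len: "length f = length \<pi>" and
    h: "inj_on (\<lambda>i. case f ! i of None \<Rightarrow> g i | Some x \<Rightarrow> real x) {..<length f}"
       "\<forall>i<length f. \<pi> ! i = card {j \<in> {..<length f}. (\<lambda>i. case f ! i of None \<Rightarrow> g i | Some x \<Rightarrow> real x) j
            \<le> (\<lambda>i. case f ! i of None \<Rightarrow> g i | Some x \<Rightarrow> real x) i}"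
    using assms unfolding covers_def Let_def by blast
  let ?w = "\<lambda>i. case f ! i of None \<Rightarrow> g i | Some x \<Rightarrow> real x"
  have "\<pi> = rk ?w (length f)"
    by (rule nth_equalityI) (use len h(2) in \<open>auto simp: rk_nth\<close>)
  show ?thesis
  proof (rule that)
    show "inj_on ?w {..<length f}" by (rule h(1))
    show "\<And>j a. j < length f \<Longrightarrow> f ! j = Some a \<Longrightarrow> ?w j = real a" by simp
    show "\<pi> = rk ?w (length f)" by fact
  qed
qed

lemma covers_elim_ex:
  assumes "covers f \<pi>"
  shows "\<exists>v. inj_on v {..<length f} \<and> (\<forall>j a. j < length f \<longrightarrow> f ! j = Some a \<longrightarrow> v j = real a) \<and> \<pi> = rk v (length f)"
  using covers_elim[OF assms] by metis

lemma covers_len: "covers f \<pi> \<Longrightarrow> length \<pi> = length f"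
  unfolding covers_def by simp

lemma covers_perm: "covers f \<pi> \<Longrightarrow> \<pi> \<in> nperms (length f)"
proof -
  assume "covers f \<pi>"
  then obtain v where "inj_on v {..<length f}" "\<pi> = rk v (length f)"
    by (rule covers_elim)
  then show ?thesis by (simp add: rk_perm)
qed

lemma covers_cons:
  assumes "covers f \<pi>" "j < length f" "k < length f" "f ! j = Some a" "f ! k = Some b"
    "\<pi> ! j < \<pi> ! k"
  shows "a < b"
proof -
  obtain v where v: "inj_on v {..<length f}"
    "\<And>i x. i < length f \<Longrightarrow> f ! i = Some x \<Longrightarrow> v i = real x"
    "\<pi> = rk v (length f)"
    using covers_elim_ex[OF assms(1)] by blast
  have "v j < v k" using rk_less[OF v(1) assms(2,3)] assms(6) v(3) by simp
  then show ?thesis using v(2)[OF assms(2,4)] v(2)[OF assms(3,5)] by simp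
qed

lemma ext_lemma:
  fixes t c :: "nat \<Rightarrow> real"
  assumes "finite E"
  shows "(\<forall>j\<in>{..<n}-E. \<forall>k\<in>{..<n}-E. t j < t k \<longrightarrow> c j < c k) \<Longrightarrow>
    \<exists>v. (\<forall>j\<in>{..<n}-E. v j = c j) \<and> (\<forall>j<n. \<forall>k<n. t j < t k \<longrightarrow> v j < v k)"
  using assms
proof (induction E arbitrary: c rule: finite_induct)
  case empty
  then show ?case by (intro exI[of _ c]) auto
next
  case (insert e E)
  show ?case
  proof (cases "e < n")
    case False
    then have eq: "{..<n} - insert e E = {..<n} - E" by auto
    show ?thesis using insert.IH[of c] insert.prems(1) unfolding eq by blast
  next
    case True
    let ?D = "{..<n} - insert e E"
    let ?L = "c ` {d \<in> ?D. t d < t e}" and ?U = "c ` {d \<in> ?D. t e < t d}"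
    have "\<forall>a\<in>?L. \<forall>b\<in>?U. a < b"
    proof (intro ballI)
      fix a b assume "a \<in> ?L" "b \<in> ?U"
      then obtain d1 d2 where "d1 \<in> ?D" "t d1 < t e" "a = c d1" "d2 \<in> ?D" "t e < t d2" "b = c d2"
        by blast
      then have "t d1 < t d2" "d1 \<in> ?D" "d2 \<in> ?D" "a = c d1" "b = c d2" by auto
      then show "a < b" using insert.prems(1) by blast
    qed
    moreover have "finite ?L" "finite ?U" by auto
    ultimately obtain r where r: "\<forall>a\<in>?L. a < r" "\<forall>b\<in>?U. r < b"
      using between[of ?L ?U] by blast
    let ?c = "c(e := r)"
    have "\<forall>j\<in>{..<n}-E. \<forall>k\<in>{..<n}-E. t j < t k \<longrightarrow> ?c j < ?c k"
    proof (intro ballI impI)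
      fix j k assume j: "j \<in> {..<n}-E" and k: "k \<in> {..<n}-E" and tl: "t j < t k"
      show "?c j < ?c k"
      proof (cases "j = e")
        case True
        then have "k \<noteq> e" using tl by auto
        then have "c k \<in> ?U" using k tl True by auto
        then have "r < c k" using r(2) by blast
        then show ?thesis using True \<open>k \<noteq> e\<close> by simp
      next
        case False
        note jf = False
        show ?thesis
        proof (cases "k = e")
          case True
          then have "c j \<in> ?L" using j tl jf by auto
          then have "c j < r" using r(1) by blast
          then show ?thesis using True jf by simp
        next
          case False
          then have "j \<in> ?D" "k \<in> ?D" using jf j k by auto
          then have "c j < c k" using tl insert.prems(1) by blast
          then show ?thesis using jf False by simp
        qed
      qed
    qed
    then obtain v where v: "\<forall>j\<in>{..<n}-E. v j = ?c j" "\<forall>j<n. \<forall>k<n. t j < t k \<longrightarrow> v j < v k"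
      using insert.IH[of ?c] by blast
    have "\<forall>j\<in>{..<n}-insert e E. v j = c j" using v(1) by auto
    then show ?thesis using v(2) by blast
  qed
qed

lemma cov_ext:
  fixes t :: "nat \<Rightarrow> real"
  assumes len: "length f = n" and inj: "inj_on t {..<n}"
    and cons: "\<And>j k a b. j < n \<Longrightarrow> k < n \<Longrightarrow> f ! j = Some a \<Longrightarrow> f ! k = Some b \<Longrightarrow> t j < t k \<Longrightarrow> a < b"
  shows "covers f (rk t n)"
proof -
  let ?E = "{j. j < n \<and> f ! j = None}"
  let ?c = "\<lambda>j. real (the (f ! j))"
  have fin: "finite ?E" by simp
  have "\<forall>j\<in>{..<n}-?E. \<forall>k\<in>{..<n}-?E. t j < t k \<longrightarrow> ?c j < ?c k"
  proof (intro ballI impI)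
    fix j k assume j: "j \<in> {..<n}-?E" and k: "k \<in> {..<n}-?E" and tl: "t j < t k"
    obtain a where a: "f ! j = Some a" using j by auto
    obtain b where b: "f ! k = Some b" using k by auto
    have "j < n" "k < n" using j k by auto
    then have "a < b" using cons a b tl by blast
    then show "?c j < ?c k" using a b by simp
  qed
  then obtain v where v: "\<forall>j\<in>{..<n}-?E. v j = ?c j" "\<forall>j<n. \<forall>k<n. t j < t k \<longrightarrow> v j < v k"
    using ext_lemma[OF fin, where t=t and c="?c" and n=n] by blast
  have ord: "\<And>j k. j < n \<Longrightarrow> k < n \<Longrightarrow> v j \<le> v k \<longleftrightarrow> t j \<le> t k"
  proof -
    fix j k assume jk: "j < n" "k < n"
    show "v j \<le> v k \<longleftrightarrow> t j \<le> t k"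
    proof (cases "j = k")
      case True then show ?thesis by simp
    next
      case False
      then have "t j \<noteq> t k" using inj jk inj_onD[of t "{..<n}" j k] by auto
      then have "t j < t k \<or> t k < t j" by auto
      then show ?thesis
      proof
        assume "t j < t k"
        then have "v j < v k" using v(2) jk by blast
        then show ?thesis using \<open>t j < t k\<close> by simp
      next
        assume "t k < t j"
        then have "v k < v j" using v(2) jk by blast
        then show ?thesis using \<open>t k < t j\<close> by simp
      qed
    qed
  qed
  have injv: "inj_on v {..<n}"
  proof (rule inj_onI)
    fix j k assume "j \<in> {..<n}" "k \<in> {..<n}" "v j = v k"
    then have "t j \<le> t k" "t k \<le> t j" using ord[of j k] ord[of k j] by auto
    then have "t j = t k" by simp
    then show "j = k" using inj \<open>j \<in> {..<n}\<close> \<open>k \<in> {..<n}\<close> inj_onD by metis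
  qed
  have "covers f (rk v n)"
  proof (rule covers_intro[OF len injv])
    fix j a assume "j < n" "f ! j = Some a"
    then have "j \<in> {..<n}-?E" by auto
    then have "v j = ?c j" using v(1) by blast
    then show "v j = real a" using \<open>f ! j = Some a\<close> by simp
  qed
  moreover have "rk v n = rk t n"
  proof (rule nth_equalityI)
    show "length (rk v n) = length (rk t n)" by simp
    fix i assume "i < length (rk v n)"
    then have i: "i < n" by simp
    have "{j \<in> {..<n}. v j \<le> v i} = {j \<in> {..<n}. t j \<le> t i}"
    proof (rule Collect_cong)
      fix j show "(j \<in> {..<n} \<and> v j \<le> v i) = (j \<in> {..<n} \<and> t j \<le> t i)"
        using ord[of j i] i by auto
    qed
    then show "rk v n ! i = rk t n ! i" using i by (simp add: rk_nth)
  qed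
  ultimately show ?thesis by simp
qed

definition consist :: "letter list \<Rightarrow> nat list \<Rightarrow> bool" where
  "consist f \<pi> \<longleftrightarrow> length \<pi> = length f \<and> \<pi> \<in> nperms (length f) \<and>
     (\<forall>j<length f. \<forall>k<length f. \<forall>a b. f ! j = Some a \<longrightarrow> f ! k = Some b \<longrightarrow> \<pi> ! j < \<pi> ! k \<longrightarrow> a < b)"

lemma covers_iff: "covers f \<pi> \<longleftrightarrow> consist f \<pi>"
proof
  assume c: "covers f \<pi>"
  have "\<forall>j<length f. \<forall>k<length f. \<forall>a b. f ! j = Some a \<longrightarrow> f ! k = Some b \<longrightarrow> \<pi> ! j < \<pi> ! k \<longrightarrow> a < b"
  proof (intro allI impI)
    fix j k a b assume "j < length f" "k < length f" "f ! j = Some a" "f ! k = Some b" "\<pi> ! j < \<pi> ! k"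
    then show "a < b" by (rule covers_cons[OF c])
  qed
  then show "consist f \<pi>"
    unfolding consist_def using covers_len[OF c] covers_perm[OF c] by blast
next
  assume c: "consist f \<pi>"
  let ?n = "length f"
  have p: "\<pi> \<in> nperms ?n" and len: "length \<pi> = ?n" using c by (auto simp: consist_def)
  have d: "distinct \<pi>" using p by (simp add: nperms_def)
  let ?t = "\<lambda>j. real (\<pi> ! j)"
  have inj: "inj_on ?t {..<?n}"
  proof (rule inj_onI)
    fix x y assume "x \<in> {..<?n}" "y \<in> {..<?n}" "?t x = ?t y"
    then show "x = y" using d len nth_eq_iff_index_eq[of \<pi> x y] by auto
  qed
  have "covers f (rk ?t ?n)"
  proof (rule cov_ext[OF refl inj])
    fix j k a b assume "j < ?n" "k < ?n" "f ! j = Some a" "f ! k = Some b" "?t j < ?t k"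
    then have "\<pi> ! j < \<pi> ! k" by simp
    moreover have "\<And>j k a b. j < ?n \<Longrightarrow> k < ?n \<Longrightarrow> f ! j = Some a \<Longrightarrow> f ! k = Some b \<Longrightarrow> \<pi> ! j < \<pi> ! k \<Longrightarrow> a < b"
      using c unfolding consist_def by blast
    ultimately show "a < b" using \<open>j < ?n\<close> \<open>k < ?n\<close> \<open>f ! j = Some a\<close> \<open>f ! k = Some b\<close> by blast
  qed
  then show "covers f \<pi>" using perm_rk[OF p] by simp
qed

lemma nperms_rev: "\<pi> \<in> nperms n \<Longrightarrow> rev \<pi> \<in> nperms n"
  by (simp add: nperms_def)

lemma consist_rev: "consist f \<pi> \<Longrightarrow> consist (rev f) (rev \<pi>)"
proof -
  assume c: "consist f \<pi>"
  let ?n = "length f"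
  have len: "length \<pi> = ?n" using c by (simp add: consist_def)
  have cc: "\<And>j k a b. j < ?n \<Longrightarrow> k < ?n \<Longrightarrow> f ! j = Some a \<Longrightarrow> f ! k = Some b \<Longrightarrow> \<pi> ! j < \<pi> ! k \<Longrightarrow> a < b"
    using c unfolding consist_def by blast
  have "\<forall>j<?n. \<forall>k<?n. \<forall>a b. rev f ! j = Some a \<longrightarrow> rev f ! k = Some b \<longrightarrow> rev \<pi> ! j < rev \<pi> ! k \<longrightarrow> a < b"
  proof (intro allI impI)
    fix j k a b assume j: "j < ?n" and k: "k < ?n" and h: "rev f ! j = Some a" "rev f ! k = Some b" "rev \<pi> ! j < rev \<pi> ! k"
    have 1: "f ! (?n - Suc j) = Some a" using h(1) j by (simp add: rev_nth)
    have 2: "f ! (?n - Suc k) = Some b" using h(2) k by (simp add: rev_nth)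
    have 3: "\<pi> ! (?n - Suc j) < \<pi> ! (?n - Suc k)" using h(3) j k len by (simp add: rev_nth)
    have "?n - Suc j < ?n" "?n - Suc k < ?n" using j k by auto
    then show "a < b" using cc[OF _ _ 1 2 3] by blast
  qed
  moreover have "rev \<pi> \<in> nperms (length (rev f))"
  proof -
    have "\<pi> \<in> nperms ?n" using c by (simp add: consist_def)
    then show ?thesis using nperms_rev by simp
  qed
  moreover have "length (rev \<pi>) = length (rev f)" using len by simp
  ultimately show ?thesis unfolding consist_def length_rev by blast
qed

lemma covers_rev: "covers (rev f) \<pi> \<longleftrightarrow> covers f (rev \<pi>)"
proof
  assume "covers (rev f) \<pi>"
  then have "consist (rev f) \<pi>" by (simp add: covers_iff)
  then have "consist (rev (rev f)) (rev \<pi>)" by (rule consist_rev)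
  then show "covers f (rev \<pi>)" by (simp add: covers_iff)
next
  assume "covers f (rev \<pi>)"
  then have "consist f (rev \<pi>)" by (simp add: covers_iff)
  then have "consist (rev f) (rev (rev \<pi>))" by (rule consist_rev)
  then show "covers (rev f) \<pi>" by (simp add: covers_iff)
qed

lemma exists_cover:
  assumes dist: "\<And>j k a. j < length f \<Longrightarrow> k < length f \<Longrightarrow> j \<noteq> k \<Longrightarrow> f ! j = Some a \<Longrightarrow> f ! k \<noteq> Some a"
  shows "\<exists>\<pi>. covers f \<pi>"
proof -
  let ?n = "length f"
  let ?t = "\<lambda>j. case f ! j of Some a \<Rightarrow> real a | None \<Rightarrow> - real j - 1"
  have inj: "inj_on ?t {..<?n}"
  proof (rule inj_onI)
    fix j k assume j: "j \<in> {..<?n}" and k: "k \<in> {..<?n}" and e: "?t j = ?t k"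
    show "j = k"
    proof (cases "f ! j")
      case None note jn = None
      show ?thesis
      proof (cases "f ! k")
        case None then show ?thesis using e jn by simp
      next
        case (Some b) then show ?thesis using e jn by simp
      qed
    next
      case (Some a) note ja = Some
      show ?thesis
      proof (cases "f ! k")
        case None then show ?thesis using e ja by simp
      next
        case (Some b) then show ?thesis using e ja dist j k by fastforce
      qed
    qed
  qed
  have "covers f (rk ?t ?n)"
    by (rule cov_ext[OF refl inj]) auto
  then show ?thesis by blast
qed

lemma covers_allNone:
  assumes "\<forall>j<length f. f ! j = None" "\<pi> \<in> nperms (length f)"
  shows "covers f \<pi>"
  using assms nperms_length[OF assms(2)] by (simp add: covers_iff consist_def)



lemma core:
  fixes W :: "nat \<Rightarrow> letter list" and n i :: nat and y :: nat
  assumes n1: "1 \<le> n"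
    and len: "\<And>i. length (W i) = n"
    and shift: "\<And>i j. Suc j < n \<Longrightarrow> W (Suc i) ! j = W i ! Suc j"
    and dist: "\<And>i j k a. j < n \<Longrightarrow> k < n \<Longrightarrow> j \<noteq> k \<Longrightarrow> W i ! j = Some a \<Longrightarrow> W i ! k \<noteq> Some a"
    and ex: "\<And>\<pi>. \<pi> \<in> nperms n \<Longrightarrow> \<exists>i. covers (W i) \<pi>"
    and uq: "\<And>\<pi> a b m. \<pi> \<in> nperms n \<Longrightarrow> covers (W a) \<pi> \<Longrightarrow> covers (W b) \<pi> \<Longrightarrow> W (a+m) = W (b+m)"
    and pred: "\<And>i. \<exists>i'. W (Suc i') = W i"
    and h0: "W i ! 0 = None" and h1: "W (Suc i) ! (n-1) = Some y"
  shows False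
proof (cases "\<forall>j. 1 \<le> j \<and> j < n \<longrightarrow> W i ! j = None")
  case True
  then have allN: "\<forall>j<length (W i). W i ! j = None" using h0 len
    by (metis less_one linorder_not_less)
  obtain \<sigma> where sc: "covers (W (Suc i)) \<sigma>"
    using exists_cover[of "W (Suc i)"] dist len by metis
  then have sp: "\<sigma> \<in> nperms n" using covers_perm len by metis
  have "covers (W i) \<sigma>" using covers_allNone[OF allN] sp len by simp
  then have "W (i+0) = W (Suc i + 0)" using uq[OF sp _ sc] by blast
  then have "W (Suc i) ! (n-1) = W i ! (n-1)" by simp
  also have "\<dots> = None" using allN len n1 by simp
  finally show False using h1 by simp
next
  case False
  then obtain p where p0: "1 \<le> p" "p < n" "W i ! p \<noteq> None"
    by blast
  then obtain a where "W i ! p = Some a" by auto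
  with p0 have p: "1 \<le> p" "p < n" "W i ! p = Some a" by auto
  define F where "F = W (Suc i)"
  define p' where "p' = p - 1"
  have p'n: "p' < n - 1" "Suc p' = p" using p unfolding p'_def by auto
  have Fp: "F ! p' = Some a" using shift[of p' i] p p'n unfolding F_def by simp
  have Fy: "F ! (n-1) = Some y" using h1 unfolding F_def by simp
  have lenF: "length F = n" unfolding F_def by (rule len)
  have ay: "a \<noteq> y" using dist[of p' "n-1" "Suc i" a] p'n Fp Fy unfolding F_def by auto
  define tm where "tm = (\<lambda>j. case F ! j of Some x \<Rightarrow> real x | None \<Rightarrow> - real j - 1)"
  define S where "S = (\<Sum>j<n. case F ! j of Some x \<Rightarrow> x | None \<Rightarrow> 0)"
  define M where "M = real S + 1"
  define v where "v = tm (n - 1 := (if a < y then - real n - 1 else M))"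
  have tm_inj: "inj_on tm {..<n}"
  proof (rule inj_onI)
    fix j k assume j: "j \<in> {..<n}" and k: "k \<in> {..<n}" and e: "tm j = tm k"
    show "j = k"
    proof (cases "F ! j")
      case None note jn = None
      show ?thesis
      proof (cases "F ! k")
        case None then show ?thesis using e jn by (simp add: tm_def)
      next
        case (Some b) then show ?thesis using e jn by (simp add: tm_def)
      qed
    next
      case (Some c) note ja = Some
      show ?thesis
      proof (cases "F ! k")
        case None then show ?thesis using e ja by (simp add: tm_def)
      next
        case (Some b)
        then have "c = b" using e ja by (simp add: tm_def)
        then show ?thesis using dist[of j k "Suc i" c] j k ja Some unfolding F_def by auto
      qed
    qed
  qed
  have tm_bounds: "- real n - 1 < tm j \<and> tm j < M" if j: "j < n" for j
  proof (cases "F ! j")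
    case None
    then show ?thesis using j by (simp add: tm_def M_def)
  next
    case (Some x)
    have "x = (case F ! j of Some x \<Rightarrow> x | None \<Rightarrow> 0)" using Some by simp
    also have "\<dots> \<le> S" unfolding S_def
      by (rule member_le_sum[of j "{..<n}" "\<lambda>j. case F ! j of Some x \<Rightarrow> x | None \<Rightarrow> 0"]) (use j in auto)
    finally have "x \<le> S" .
    then show ?thesis using Some by (simp add: tm_def M_def)
  qed
  have v_low: "\<And>j. j < n - 1 \<Longrightarrow> v j = tm j" unfolding v_def by simp
  have inj: "inj_on v {..<n}"
  proof (rule inj_onI)
    fix j k assume j: "j \<in> {..<n}" and k: "k \<in> {..<n}" and e: "v j = v k"
    show "j = k"
    proof (cases "j = n - 1")
      case True
      show ?thesis
      proof (rule ccontr)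
        assume "j \<noteq> k"
        then have "k < n - 1" using k True by auto
        then have "v k = tm k" by (rule v_low)
        moreover have "v j = (if a < y then - real n - 1 else M)" using True by (simp add: v_def)
        moreover have "k < n" using \<open>k < n - 1\<close> by simp
        ultimately show False using e tm_bounds[of k] by (auto split: if_splits)
      qed
    next
      case False
      then have jl: "j < n - 1" using j by auto
      show ?thesis
      proof (cases "k = n - 1")
        case True
        have "v k = (if a < y then - real n - 1 else M)" using True by (simp add: v_def)
        moreover have "v j = tm j" using jl by (rule v_low)
        moreover have "j < n" using jl by simp
        ultimately show ?thesis using e tm_bounds[of j] by (auto split: if_splits)
      next
        case False
        then have "k < n - 1" using k by auto
        then have "tm j = tm k" using e jl v_low by simp
        then show ?thesis using tm_inj j k by (auto dest: inj_onD)
      qed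
    qed
  qed
  define \<sigma> where "\<sigma> = rk v n"
  have sp: "\<sigma> \<in> nperms n" unfolding \<sigma>_def by (rule rk_perm[OF inj])
  have nF: "\<not> covers F \<sigma>"
  proof
    assume cF: "covers F \<sigma>"
    have pn: "p' < n" "n - 1 < n" using p'n n1 by auto
    have vp: "v p' = real a" using v_low[OF p'n(1)] Fp by (simp add: tm_def)
    show False
    proof (cases "a < y")
      case True
      then have "v (n-1) < v p'" using vp by (simp add: v_def)
      then have "\<sigma> ! (n-1) < \<sigma> ! p'" unfolding \<sigma>_def using rk_less[OF inj pn(2) pn(1)] by simp
      then have "y < a" using covers_cons[OF cF _ _ Fy Fp] lenF pn by simp
      then show False using True by simp
    next
      case False
      then have ya: "y < a" using ay by simp
      have "a \<le> S"
      proof -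
        have "a = (case F ! p' of Some x \<Rightarrow> x | None \<Rightarrow> 0)" using Fp by simp
        also have "\<dots> \<le> S" unfolding S_def
          by (rule member_le_sum[of p' "{..<n}" "\<lambda>j. case F ! j of Some x \<Rightarrow> x | None \<Rightarrow> 0"]) (use pn in auto)
        finally show ?thesis .
      qed
      then have "v p' < v (n-1)" using vp False by (simp add: v_def M_def)
      then have "\<sigma> ! p' < \<sigma> ! (n-1)" unfolding \<sigma>_def using rk_less[OF inj pn(1) pn(2)] by simp
      then have "a < y" using covers_cons[OF cF _ _ Fp Fy] lenF pn by simp
      then show False using ya by simp
    qed
  qed
  obtain i' where ci': "covers (W i') \<sigma>" using ex[OF sp] by blast
  obtain i'' where i'': "W (Suc i'') = W i'" using pred by blast
  define G where "G = W i''"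
  define H where "H = W i'"
  have GH: "\<And>j. Suc j < n \<Longrightarrow> G ! Suc j = H ! j"
    unfolding G_def H_def using shift i'' by metis
  have cH: "covers H \<sigma>" unfolding H_def by (rule ci')
  have lenH: "length H = n" unfolding H_def by (rule len)
  have Hcons: "\<And>j k c d. j < n \<Longrightarrow> k < n \<Longrightarrow> H ! j = Some c \<Longrightarrow> H ! k = Some d \<Longrightarrow> \<sigma> ! j < \<sigma> ! k \<Longrightarrow> c < d"
    using covers_cons[OF cH] lenH by metis
  define Lo where "Lo = v ` {j. j < n - 1 \<and> (\<exists>c d. H ! j = Some c \<and> G ! 0 = Some d \<and> c < d)}"
  define Up where "Up = v ` {j. j < n - 1 \<and> (\<exists>c d. H ! j = Some c \<and> G ! 0 = Some d \<and> d < c)}"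
  have LU: "\<forall>x\<in>Lo. \<forall>z\<in>Up. x < z"
  proof (intro ballI)
    fix x z assume "x \<in> Lo" "z \<in> Up"
    then obtain j k c d c' d' where jk: "j < n - 1" "H ! j = Some c" "G ! 0 = Some d" "c < d" "x = v j"
      "k < n - 1" "H ! k = Some c'" "G ! 0 = Some d'" "d' < c'" "z = v k"
      unfolding Lo_def Up_def by blast
    have "d = d'" using jk by simp
    then have cc: "c < c'" using jk by simp
    then have "j \<noteq> k" using jk by auto
    have jkn: "j < n" "k < n" using jk by auto
    have "v j \<noteq> v k" using \<open>j \<noteq> k\<close> using inj inj_onD[of v "{..<n}" j k] jkn by auto
    moreover have "\<not> v k < v j"
    proof
      assume "v k < v j"
      then have "\<sigma> ! k < \<sigma> ! j" unfolding \<sigma>_def using rk_less[OF inj, of k j] jkn by simp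
      then have "c' < c" using Hcons[of k j c' c] jk jkn by simp
      then show False using cc by simp
    qed
    ultimately show "x < z" using jk by simp
  qed
  have fins: "finite Lo" "finite Up" "finite (v ` {..<n-1})" unfolding Lo_def Up_def by auto
  obtain r where r: "\<forall>x\<in>Lo. x < r" "\<forall>z\<in>Up. r < z" "r \<notin> v ` {..<n-1}"
    using between_avoid[OF fins LU] by blast
  define t where "t = (\<lambda>j. case j of 0 \<Rightarrow> r | Suc j' \<Rightarrow> v j')"
  have tinj: "inj_on t {..<n}"
  proof (rule inj_onI)
    fix j k assume j: "j \<in> {..<n}" and k: "k \<in> {..<n}" and e: "t j = t k"
    show "j = k"
    proof (cases j)
      case 0 note j0 = 0
      show ?thesis
      proof (cases k)
        case 0 then show ?thesis using j0 by simp
      next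
        case (Suc k')
        then have "k' < n - 1" using k by auto
        then have "v k' \<in> v ` {..<n-1}" by simp
        then show ?thesis using e j0 Suc r(3) by (simp add: t_def)
      qed
    next
      case (Suc j') note js = Suc
      show ?thesis
      proof (cases k)
        case 0
        have "j' < n - 1" using j js by auto
        then have "v j' \<in> v ` {..<n-1}" by simp
        then show ?thesis using e js 0 r(3) by (simp add: t_def)
      next
        case (Suc k')
        then have "v j' = v k'" using e js by (simp add: t_def)
        moreover have "j' \<in> {..<n}" "k' \<in> {..<n}" using j k js Suc by auto
        ultimately have "j' = k'" using inj by (auto dest: inj_onD)
        then show ?thesis using js Suc by simp
      qed
    qed
  qed
  define \<pi> where "\<pi> = rk t n"
  have pp: "\<pi> \<in> nperms n" unfolding \<pi>_def by (rule rk_perm[OF tinj])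
  have cG: "covers G \<pi>" unfolding \<pi>_def
  proof (rule cov_ext[OF _ tinj])
    show "length G = n" unfolding G_def by (rule len)
  next
    fix j k c d assume j: "j < n" and k: "k < n" and gj: "G ! j = Some c" and gk: "G ! k = Some d"
      and tl: "t j < t k"
    show "c < d"
    proof (cases j)
      case 0 note j0 = 0
      show ?thesis
      proof (cases k)
        case 0 then show ?thesis using j0 tl by simp
      next
        case (Suc k')
        have k': "k' < n - 1" using k Suc by auto
        have hk: "H ! k' = Some d" using GH[of k'] k Suc gk by simp
        have rv: "r < v k'" using tl j0 Suc by (simp add: t_def)
        show ?thesis
        proof (rule ccontr)
          assume "\<not> c < d"
          moreover have "c \<noteq> d" using dist[of 0 k i'' c] k Suc gj gk j0 unfolding G_def by auto
          ultimately have "d < c" by simp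
          then have "v k' \<in> Lo" unfolding Lo_def using k' hk gj j0 by blast
          then show False using r(1) rv by auto
        qed
      qed
    next
      case (Suc j') note js = Suc
      have j': "j' < n - 1" using j js by auto
      have hj: "H ! j' = Some c" using GH[of j'] j js gj by simp
      show ?thesis
      proof (cases k)
        case 0
        have rv: "v j' < r" using tl js 0 by (simp add: t_def)
        show ?thesis
        proof (rule ccontr)
          assume "\<not> c < d"
          moreover have "c \<noteq> d" using dist[of j 0 i'' c] j js gj gk 0 unfolding G_def by auto
          ultimately have "d < c" by simp
          then have "v j' \<in> Up" unfolding Up_def using j' hj gk 0 by blast
          then show False using r(2) rv by auto
        qed
      next
        case (Suc k')
        have k': "k' < n - 1" using k Suc by auto
        have hk: "H ! k' = Some d" using GH[of k'] k Suc gk by simp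
        have "v j' < v k'" using tl js Suc by (simp add: t_def)
        then have "\<sigma> ! j' < \<sigma> ! k'" unfolding \<sigma>_def using rk_less[OF inj, of j' k'] j' k' by simp
        then show ?thesis using Hcons[of j' k' c d] j' k' hj hk by simp
      qed
    qed
  qed
  have cW: "covers (W i) \<pi>" unfolding \<pi>_def
  proof (rule cov_ext[OF len tinj])
    fix j k c d assume j: "j < n" and k: "k < n" and gj: "W i ! j = Some c" and gk: "W i ! k = Some d"
      and tl: "t j < t k"
    obtain j' where js: "j = Suc j'" using gj h0 by (cases j) auto
    obtain k' where ks: "k = Suc k'" using gk h0 by (cases k) auto
    have j': "j' < n - 1" and k': "k' < n - 1" using j k js ks by auto
    have "F ! j' = Some c" using shift[of j' i] j js gj unfolding F_def by simp
    then have "v j' = real c" using v_low[OF j'] by (simp add: tm_def)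
    moreover have "F ! k' = Some d" using shift[of k' i] k ks gk unfolding F_def by simp
    then have "v k' = real d" using v_low[OF k'] by (simp add: tm_def)
    moreover have "v j' < v k'" using tl js ks by (simp add: t_def)
    ultimately show "c < d" by simp
  qed
  have "W (i'' + 1) = W (i + 1)" using uq[OF pp cG[unfolded G_def] cW] by blast
  then have "W i' = F" using i'' unfolding F_def by simp
  then show False using ci' nF by simp
qed



definition ins :: "nat \<Rightarrow> 'a \<Rightarrow> 'a list \<Rightarrow> 'a list" where
  "ins q x xs = take q xs @ x # drop q xs"

definition del :: "nat \<Rightarrow> 'a list \<Rightarrow> 'a list" where
  "del q xs = take q xs @ drop (Suc q) xs"

lemma length_ins[simp]: "q \<le> length xs \<Longrightarrow> length (ins q x xs) = Suc (length xs)"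
  by (simp add: ins_def)

lemma nth_ins: "q \<le> length xs \<Longrightarrow> j < Suc (length xs) \<Longrightarrow>
  ins q x xs ! j = (if j < q then xs ! j else if j = q then x else xs ! (j - 1))"
  by (auto simp: ins_def nth_append min_def)

lemma length_del[simp]: "q < length xs \<Longrightarrow> length (del q xs) = length xs - 1"
  by (simp add: del_def)

lemma nth_del: "q < length xs \<Longrightarrow> j < length xs - 1 \<Longrightarrow>
  del q xs ! j = (if j < q then xs ! j else xs ! Suc j)"
  by (auto simp: del_def nth_append min_def)

lemma del_ins: "q \<le> length xs \<Longrightarrow> del q (ins q x xs) = xs"
  by (simp add: ins_def del_def)

lemma ins_del: "q < length xs \<Longrightarrow> ins q (xs ! q) (del q xs) = xs"
  unfolding ins_def del_def
  by (simp add: min_def Cons_nth_drop_Suc)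

lemma del_split: "q < length xs \<Longrightarrow> xs = take q xs @ xs ! q # drop (Suc q) xs"
  by (simp add: id_take_nth_drop)

lemma count_del: "q < length xs \<Longrightarrow> count_list xs z = count_list (del q xs) z + (if xs ! q = z then 1 else 0)"
proof -
  assume q: "q < length xs"
  have "count_list xs z = count_list (take q xs @ xs ! q # drop (Suc q) xs) z"
    using del_split[OF q] by metis
  then show ?thesis by (simp add: del_def)
qed

lemma distinct_del: "distinct xs \<Longrightarrow> q < length xs \<Longrightarrow> distinct (del q xs) \<and> set (del q xs) = set xs - {xs ! q}"
proof -
  assume d: "distinct xs" and q: "q < length xs"
  have e: "xs = take q xs @ xs ! q # drop (Suc q) xs" by (rule del_split[OF q])
  then have "distinct (take q xs @ xs ! q # drop (Suc q) xs)" using d by metis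
  then have 1: "distinct (take q xs @ drop (Suc q) xs)" and 2: "xs ! q \<notin> set (take q xs @ drop (Suc q) xs)"
    by auto
  have "set xs = set (take q xs @ drop (Suc q) xs) \<union> {xs ! q}"
    by (subst e) auto
  then show ?thesis using 1 2 unfolding del_def by auto
qed

lemma count_card: "count_list xs z = card {q. q < length xs \<and> xs ! q = z}"
  by (simp add: count_list_eq_length_filter length_filter_conv_card eq_commute)

lemma finite_nperms: "finite (nperms n)"
proof -
  have "nperms n \<subseteq> {xs. set xs \<subseteq> {1..n} \<and> length xs = n}"
    using nperms_length by (auto simp: nperms_def)
  moreover have "finite {xs. set xs \<subseteq> {1..n} \<and> length xs = n}"
    by (rule finite_lists_length_eq) simp
  ultimately show ?thesis by (rule finite_subset)
qed

lemma nperms_0: "nperms 0 = {[]}"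
  by (auto simp: nperms_def)

definition distl :: "letter list \<Rightarrow> bool" where
  "distl f \<longleftrightarrow> (\<forall>j<length f. \<forall>k<length f. \<forall>a. j \<noteq> k \<longrightarrow> f ! j = Some a \<longrightarrow> f ! k \<noteq> Some a)"

lemma distl_del: "distl f \<Longrightarrow> q < length f \<Longrightarrow> distl (del q f)"
proof -
  assume d: "distl f" and q: "q < length f"
  show ?thesis unfolding distl_def
  proof (intro allI impI)
    fix j k a assume j: "j < length (del q f)" and k: "k < length (del q f)" and jk: "j \<noteq> k"
      and e: "del q f ! j = Some a"
    let ?j = "if j < q then j else Suc j" and ?k = "if k < q then k else Suc k"
    have "?j < length f" "?k < length f" "?j \<noteq> ?k" using j k jk q by auto
    moreover have "del q f ! j = f ! ?j" "del q f ! k = f ! ?k" using nth_del[OF q] j k q by auto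
    have dd: "\<And>j k a. j < length f \<Longrightarrow> k < length f \<Longrightarrow> j \<noteq> k \<Longrightarrow> f ! j = Some a \<Longrightarrow> f ! k \<noteq> Some a"
      using d unfolding distl_def by blast
    show "del q f ! k \<noteq> Some a"
    proof
      assume "del q f ! k = Some a"
      then have "f ! ?k = Some a" "f ! ?j = Some a" using e \<open>del q f ! j = f ! ?j\<close> \<open>del q f ! k = f ! ?k\<close> by auto
      then show False using dd[of ?j ?k a] \<open>?j < length f\<close> \<open>?k < length f\<close> \<open>?j \<noteq> ?k\<close> by blast
    qed
  qed
qed

lemma consistD: "consist f \<pi> \<Longrightarrow> j < length f \<Longrightarrow> k < length f \<Longrightarrow> f ! j = Some a \<Longrightarrow> f ! k = Some b \<Longrightarrow> \<pi> ! j < \<pi> ! k \<Longrightarrow> a < b"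
  unfolding consist_def by blast

lemma consist_len: "consist f \<pi> \<Longrightarrow> length \<pi> = length f"
  unfolding consist_def by blast

lemma consist_perm: "consist f \<pi> \<Longrightarrow> \<pi> \<in> nperms (length f)"
  unfolding consist_def by blast

lemma consistI:
  assumes "\<pi> \<in> nperms (length f)"
    and "\<And>j k a b. j < length f \<Longrightarrow> k < length f \<Longrightarrow> f ! j = Some a \<Longrightarrow> f ! k = Some b \<Longrightarrow> \<pi> ! j < \<pi> ! k \<Longrightarrow> a < b"
  shows "consist f \<pi>"
proof -
  have "length \<pi> = length f" using nperms_length[OF assms(1)] .
  then show ?thesis unfolding consist_def using assms by blast
qed

definition okq :: "letter list \<Rightarrow> nat \<Rightarrow> bool" where
  "okq f q \<longleftrightarrow> q < length f \<and> (f ! q = None \<or> (\<exists>a. f ! q = Some a \<and> (\<forall>k<length f. k \<noteq> q \<longrightarrow> (\<forall>b. f ! k = Some b \<longrightarrow> b < a))))"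

lemma consist_step:
  assumes lf: "length f = Suc n"
  shows "{\<pi>. consist f \<pi>} = (\<Union>q\<in>{q. okq f q}. ins q (Suc n) ` {\<tau>. consist (del q f) \<tau>})"
    (is "?C = (\<Union>q\<in>?Q. ?A q)")
proof
  show "?C \<subseteq> (\<Union>q\<in>?Q. ?A q)"
  proof
    fix \<pi> assume "\<pi> \<in> ?C"
    then have c: "consist f \<pi>" by simp
    have lp: "length \<pi> = Suc n" using consist_len[OF c] lf by simp
    have pp: "\<pi> \<in> nperms (Suc n)" using consist_perm[OF c] lf by simp
    have dp: "distinct \<pi>" and sp: "set \<pi> = {1..Suc n}" using pp unfolding nperms_def by auto
    have cc: "\<And>j k a b. j < Suc n \<Longrightarrow> k < Suc n \<Longrightarrow> f ! j = Some a \<Longrightarrow> f ! k = Some b \<Longrightarrow> \<pi> ! j < \<pi> ! k \<Longrightarrow> a < b"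
    proof -
      fix j k a b assume h: "j < Suc n" "k < Suc n" "f ! j = Some a" "f ! k = Some b" "\<pi> ! j < \<pi> ! k"
      show "a < b" by (rule consistD[OF c, of j k a b]) (use h lf in simp_all)
    qed
    have "Suc n \<in> set \<pi>" using sp by simp
    then obtain q where q: "q < Suc n" "\<pi> ! q = Suc n" using lp by (auto simp: in_set_conv_nth)
    have vals: "\<pi> ! k < Suc n" if k: "k < Suc n" "k \<noteq> q" for k
    proof -
      have "\<pi> ! k \<in> set \<pi>" using k lp by simp
      then have "\<pi> ! k \<le> Suc n" using sp by simp
      moreover have "\<pi> ! k \<noteq> \<pi> ! q" using nth_eq_iff_index_eq[OF dp, of k q] k q lp by simp
      ultimately show "\<pi> ! k < Suc n" using q by simp
    qed
    have qQ: "okq f q"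
    proof (cases "f ! q")
      case None then show ?thesis using q lf unfolding okq_def by simp
    next
      case (Some a)
      have "\<forall>k<length f. k \<noteq> q \<longrightarrow> (\<forall>b. f ! k = Some b \<longrightarrow> b < a)"
      proof (intro allI impI)
        fix k b assume "k < length f" "k \<noteq> q" "f ! k = Some b"
        then show "b < a" using cc[of k q b a] vals[of k] q Some lf by simp
      qed
      then show ?thesis unfolding okq_def
      proof (intro conjI disjI2 exI[of _ a])
        show "q < length f" using q lf by simp
        show "f ! q = Some a" by (rule Some)
      qed
    qed
    define \<tau> where "\<tau> = del q \<pi>"
    have ql: "q < length \<pi>" using q lp by simp
    have e: "\<pi> = ins q (Suc n) \<tau>" unfolding \<tau>_def using ins_del[OF ql] q by simp
    have dd: "distinct (del q \<pi>) \<and> set (del q \<pi>) = set \<pi> - {\<pi> ! q}" by (rule distinct_del[OF dp ql])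
    have dt: "distinct \<tau>" using dd unfolding \<tau>_def by simp
    have "set \<tau> = {1..Suc n} - {Suc n}" using dd sp q unfolding \<tau>_def by simp
    moreover have "{1..Suc n} - {Suc n} = {1..n}" by auto
    ultimately have st: "set \<tau> = {1..n}" by (simp only:)
    have lt: "length \<tau> = n" unfolding \<tau>_def using ql lp by simp
    have lg: "length (del q f) = n" using lf q by simp
    have "consist (del q f) \<tau>"
    proof (rule consistI)
      show "\<tau> \<in> nperms (length (del q f))" using dt st lg by (simp add: nperms_def)
      fix j k a b assume j: "j < length (del q f)" and k: "k < length (del q f)"
        and fa: "del q f ! j = Some a" and fb: "del q f ! k = Some b" and tl: "\<tau> ! j < \<tau> ! k"
      define j' where "j' = (if j < q then j else Suc j)"
      define k' where "k' = (if k < q then k else Suc k)"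
      have idx: "j' < Suc n" "k' < Suc n" using j k lg unfolding j'_def k'_def by auto
      have "del q f ! j = f ! j'" using nth_del[of q f j] j q lf unfolding j'_def by simp
      moreover have "del q f ! k = f ! k'" using nth_del[of q f k] k q lf unfolding k'_def by simp
      moreover have "\<tau> ! j = \<pi> ! j'" unfolding \<tau>_def j'_def using nth_del[OF ql, of j] j lg lp by simp
      moreover have "\<tau> ! k = \<pi> ! k'" unfolding \<tau>_def k'_def using nth_del[OF ql, of k] k lg lp by simp
      ultimately show "a < b" using cc[OF idx] fa fb tl by simp
    qed
    then show "\<pi> \<in> (\<Union>q\<in>?Q. ?A q)" using qQ e by blast
  qed
next
  show "(\<Union>q\<in>?Q. ?A q) \<subseteq> ?C"
  proof
    fix \<pi> assume "\<pi> \<in> (\<Union>q\<in>?Q. ?A q)"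
    then obtain q \<tau> where qQ: "okq f q" and ct: "consist (del q f) \<tau>" and e: "\<pi> = ins q (Suc n) \<tau>"
      by blast
    have q: "q < Suc n" using qQ lf unfolding okq_def by simp
    have lg: "length (del q f) = n" using lf q by simp
    have lt: "length \<tau> = n" using consist_len[OF ct] lg by simp
    have tp: "\<tau> \<in> nperms n" using consist_perm[OF ct] lg by simp
    have dt: "distinct \<tau>" and st: "set \<tau> = {1..n}" using tp unfolding nperms_def by auto
    have qt: "q \<le> length \<tau>" using q lt by simp
    have ct': "\<And>j k a b. j < n \<Longrightarrow> k < n \<Longrightarrow> del q f ! j = Some a \<Longrightarrow> del q f ! k = Some b \<Longrightarrow> \<tau> ! j < \<tau> ! k \<Longrightarrow> a < b"
    proof -
      fix j k a b assume h: "j < n" "k < n" "del q f ! j = Some a" "del q f ! k = Some b" "\<tau> ! j < \<tau> ! k"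
      show "a < b" by (rule consistD[OF ct, of j k a b]) (use h lg in simp_all)
    qed
    have lp: "length \<pi> = Suc n" using e qt lt by simp
    have s1: "set \<pi> = set (take q \<tau>) \<union> set (drop q \<tau>) \<union> {Suc n}" using e unfolding ins_def by auto
    have "set (take q \<tau>) \<union> set (drop q \<tau>) = set \<tau>"
      by (metis append_take_drop_id set_append)
    then have sp: "set \<pi> = {1..Suc n}" using s1 st by auto
    have dp: "distinct \<pi>"
    proof -
      have "Suc n \<notin> set \<tau>" using st by simp
      then have "Suc n \<notin> set (take q \<tau>)" "Suc n \<notin> set (drop q \<tau>)"
        by (meson in_set_dropD in_set_takeD)+
      moreover have "distinct (take q \<tau> @ drop q \<tau>)" using dt by (simp only: append_take_drop_id)
      then have "distinct (take q \<tau>) \<and> distinct (drop q \<tau>) \<and> set (take q \<tau>) \<inter> set (drop q \<tau>) = {}"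
        by (simp only: distinct_append)
      ultimately show ?thesis using e unfolding ins_def by (simp add: distinct_append)
    qed
    have pv: "\<pi> ! j \<le> Suc n" if "j < Suc n" for j
    proof -
      have "\<pi> ! j \<in> set \<pi>" using lp that by simp
      then show "\<pi> ! j \<le> Suc n" using sp by simp
    qed
    have pq: "\<pi> ! q = Suc n" using e nth_ins[OF qt, of q] q lt by simp
    have "consist f \<pi>"
    proof (rule consistI)
      show "\<pi> \<in> nperms (length f)" using dp sp lf by (simp add: nperms_def)
      fix j k a b assume j: "j < length f" and k: "k < length f"
        and fa: "f ! j = Some a" and fb: "f ! k = Some b" and pl: "\<pi> ! j < \<pi> ! k"
      show "a < b"
      proof (cases "j = q")
        case True
        then show ?thesis using pl pq pv[of k] k lf by simp
      next
        case jq: False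
        show ?thesis
        proof (cases "k = q")
          case True
          then have "\<forall>k<length f. k \<noteq> q \<longrightarrow> (\<forall>b'. f ! k = Some b' \<longrightarrow> b' < b)"
            using qQ fb unfolding okq_def by auto
          then show ?thesis using j jq fa by blast
        next
          case kq: False
          define j' where "j' = (if j < q then j else j - 1)"
          define k' where "k' = (if k < q then k else k - 1)"
          have idx: "j' < n" "k' < n" using j k lf jq kq q unfolding j'_def k'_def by auto
          have "del q f ! j' = f ! j'" if "j < q" using nth_del[of q f j'] idx q lf that unfolding j'_def by simp
          have "del q f ! j' = f ! j"
            using nth_del[of q f j'] idx q lf jq unfolding j'_def by (cases "j < q") auto
          moreover have "del q f ! k' = f ! k"
            using nth_del[of q f k'] idx q lf kq unfolding k'_def by (cases "k < q") auto
          moreover have "\<pi> ! j = \<tau> ! j'"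
            using e nth_ins[OF qt, of j] j lf lt jq unfolding j'_def by (cases "j < q") auto
          moreover have "\<pi> ! k = \<tau> ! k'"
            using e nth_ins[OF qt, of k] k lf lt kq unfolding k'_def by (cases "k < q") auto
          ultimately show ?thesis using ct'[OF idx] fa fb pl by simp
        qed
      qed
    qed
    then show "\<pi> \<in> ?C" by simp
  qed
qed



lemma consist_finite: "finite {\<tau>. consist g \<tau>}"
proof -
  have "{\<tau>. consist g \<tau>} \<subseteq> nperms (length g)" using consist_perm by blast
  then show ?thesis using finite_nperms finite_subset by blast
qed

lemma count_main:
  "length f = n \<Longrightarrow> distl f \<Longrightarrow> card {\<pi>. consist f \<pi>} * fact (n - count_list f None) = fact n"
proof (induction n arbitrary: f)
  case 0
  then have f: "f = []" by simp
  have "{\<pi>. consist f \<pi>} = {[]}"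
  proof
    show "{\<pi>. consist f \<pi>} \<subseteq> {[]}" using consist_len f by fastforce
    have "consist [] []" by (rule consistI) (auto simp: nperms_0)
    then show "{[]} \<subseteq> {\<pi>. consist f \<pi>}" using f by simp
  qed
  then show ?case using f by simp
next
  case (Suc n)
  note lf = Suc.prems(1) and df = Suc.prems(2)
  define cnt where "cnt = count_list f None"
  define k where "k = Suc n - cnt"
  define A where "A = (\<lambda>q. {\<tau>. consist (del q f) \<tau>})"
  define Q where "Q = {q. okq f q}"
  define Q0 where "Q0 = {q. q < Suc n \<and> f ! q = None}"
  define Q1 where "Q1 = {q. okq f q \<and> f ! q \<noteq> None}"
  have QQ: "Q = Q0 \<union> Q1" unfolding Q_def Q0_def Q1_def okq_def using lf by auto
  have Q01: "Q0 \<inter> Q1 = {}" unfolding Q0_def Q1_def by auto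
  have finQ: "finite Q0" "finite Q1"
  proof -
    show "finite Q0" unfolding Q0_def by simp
    have "Q1 \<subseteq> {..<Suc n}" unfolding Q1_def okq_def using lf by auto
    then show "finite Q1" using finite_subset by blast
  qed
  have C: "{\<pi>. consist f \<pi>} = (\<Union>q\<in>Q. ins q (Suc n) ` A q)"
    unfolding Q_def A_def by (rule consist_step[OF lf])
  have qlt: "q < Suc n" if "q \<in> Q" for q using that lf unfolding Q_def okq_def by simp
  have lenA: "length \<tau> = n" if "q \<in> Q" "\<tau> \<in> A q" for q \<tau>
  proof -
    have "length (del q f) = n" using qlt[OF that(1)] lf by simp
    then show ?thesis using that(2) consist_len unfolding A_def by fastforce
  qed
  have permA: "\<tau> \<in> nperms n" if "q \<in> Q" "\<tau> \<in> A q" for q \<tau>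
  proof -
    have "length (del q f) = n" using qlt[OF that(1)] lf by simp
    then show ?thesis using that(2) consist_perm unfolding A_def by fastforce
  qed
  have disj: "\<forall>q1\<in>Q. \<forall>q2\<in>Q. q1 \<noteq> q2 \<longrightarrow> ins q1 (Suc n) ` A q1 \<inter> ins q2 (Suc n) ` A q2 = {}"
  proof (intro ballI impI)
    fix q1 q2 assume q1: "q1 \<in> Q" and q2: "q2 \<in> Q" and ne: "q1 \<noteq> q2"
    show "ins q1 (Suc n) ` A q1 \<inter> ins q2 (Suc n) ` A q2 = {}"
    proof (rule ccontr)
      assume "ins q1 (Suc n) ` A q1 \<inter> ins q2 (Suc n) ` A q2 \<noteq> {}"
      then obtain t1 t2 where t: "t1 \<in> A q1" "t2 \<in> A q2" "ins q1 (Suc n) t1 = ins q2 (Suc n) t2"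
        by blast
      have l1: "length t1 = n" and l2: "length t2 = n" using lenA q1 q2 t by auto
      have a: "ins q1 (Suc n) t1 ! q1 = Suc n" using nth_ins[of q1 t1 q1] qlt[OF q1] l1 by simp
      have b: "ins q2 (Suc n) t2 ! q1 = (if q1 < q2 then t2 ! q1 else t2 ! (q1 - 1))"
        using nth_ins[of q2 t2 q1] qlt[OF q1] qlt[OF q2] l2 ne by simp
      have pt2: "t2 \<in> nperms n" using permA q2 t by auto
      then have st2: "set t2 = {1..n}" unfolding nperms_def by simp
      have "t2 ! (if q1 < q2 then q1 else q1 - 1) \<in> set t2"
        using qlt[OF q1] qlt[OF q2] l2 ne by (intro nth_mem) auto
      then have "t2 ! (if q1 < q2 then q1 else q1 - 1) \<le> n" using st2 by simp
      then have "ins q2 (Suc n) t2 ! q1 \<le> n" using b by (cases "q1 < q2") auto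
      then show False using a t(3) by simp
    qed
  qed
  have cardimg: "card (ins q (Suc n) ` A q) = card (A q)" if "q \<in> Q" for q
  proof (rule card_image)
    show "inj_on (ins q (Suc n)) (A q)"
    proof (rule inj_onI)
      fix x y assume "x \<in> A q" "y \<in> A q" "ins q (Suc n) x = ins q (Suc n) y"
      then have "del q (ins q (Suc n) x) = del q (ins q (Suc n) y)" by simp
      moreover have "q \<le> length x" "q \<le> length y" using lenA[OF that] qlt[OF that] \<open>x \<in> A q\<close> \<open>y \<in> A q\<close> by fastforce+
      ultimately show "x = y" using del_ins by metis
    qed
  qed
  have finA: "finite (A q)" for q unfolding A_def by (rule consist_finite)
  have "card {\<pi>. consist f \<pi>} = (\<Sum>q\<in>Q. card (ins q (Suc n) ` A q))"
    unfolding C using card_UN_disjoint[of Q "\<lambda>q. ins q (Suc n) ` A q"] disj finA finQ QQ by simp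
  also have "\<dots> = (\<Sum>q\<in>Q. card (A q))" using cardimg by simp
  finally have cC: "card {\<pi>. consist f \<pi>} = (\<Sum>q\<in>Q0. card (A q)) + (\<Sum>q\<in>Q1. card (A q))"
    using QQ Q01 finQ by (simp add: sum.union_disjoint)
  have cnt_le: "cnt \<le> Suc n" unfolding cnt_def using count_le_length[of f None] lf by simp
  have IH: "card (A q) * fact (n - count_list (del q f) None) = fact n" if "q < Suc n" for q
    unfolding A_def using Suc.IH[of "del q f"] distl_del[OF df] that lf by simp
  have s0: "card (A q) * fact k = fact n" if "q \<in> Q0" for q
  proof -
    have q: "q < Suc n" "f ! q = None" using that unfolding Q0_def by auto
    have "cnt = count_list (del q f) None + 1" unfolding cnt_def using count_del[of q f None] q lf by simp
    then have "n - count_list (del q f) None = k" unfolding k_def by simp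
    then show ?thesis using IH[OF q(1)] by simp
  qed
  have s1: "card (A q) * fact k = k * fact n" if "q \<in> Q1" for q
  proof -
    have q: "q < Suc n" "f ! q \<noteq> None" using that lf unfolding Q1_def okq_def by auto
    have "cnt = count_list (del q f) None" unfolding cnt_def using count_del[of q f None] q lf by simp
    moreover have "count_list (del q f) None \<le> n" using count_le_length[of "del q f" None] q lf by simp
    ultimately have kk: "k = Suc (n - count_list (del q f) None)" unfolding k_def by simp
    have "card (A q) * fact k = card (A q) * (k * fact (n - count_list (del q f) None))"
      using kk by simp
    also have "\<dots> = k * (card (A q) * fact (n - count_list (del q f) None))" by simp
    also have "\<dots> = k * fact n" using IH[OF q(1)] by simp
    finally show ?thesis .
  qed
  have cQ0: "card Q0 = cnt" unfolding cnt_def Q0_def using count_card[of f None] lf by simp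
  have cQ1: "card Q1 * k = k"
  proof (cases "k = 0")
    case True then show ?thesis by simp
  next
    case False
    then have "cnt < Suc n" unfolding k_def by simp
    then have ne: "Q0 \<noteq> {..<Suc n}" using cQ0 by auto
    have "\<exists>q<Suc n. f ! q \<noteq> None"
    proof (rule ccontr)
      assume "\<not> (\<exists>q<Suc n. f ! q \<noteq> None)"
      then have "Q0 = {..<Suc n}" unfolding Q0_def by auto
      then show False using ne by simp
    qed
    then obtain q where q: "q < Suc n" "f ! q \<noteq> None" by blast
    define L where "L = {a. \<exists>q<Suc n. f ! q = Some a}"
    have "L \<subseteq> (\<lambda>q. the (f ! q)) ` {..<Suc n}" unfolding L_def by force
    then have finL: "finite L" using finite_subset by blast
    have "L \<noteq> {}" using q unfolding L_def by auto
    then have "Max L \<in> L" using finL by simp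
    then obtain q0 where q0: "q0 < Suc n" "f ! q0 = Some (Max L)" unfolding L_def by blast
    have dd: "\<And>j k a. j < length f \<Longrightarrow> k < length f \<Longrightarrow> j \<noteq> k \<Longrightarrow> f ! j = Some a \<Longrightarrow> f ! k \<noteq> Some a"
      using df unfolding distl_def by blast
    have mx: "\<forall>k<length f. k \<noteq> q0 \<longrightarrow> (\<forall>b. f ! k = Some b \<longrightarrow> b < Max L)"
    proof (intro allI impI)
      fix j b assume j: "j < length f" "j \<noteq> q0" "f ! j = Some b"
      then have "b \<in> L" unfolding L_def using lf by auto
      then have "b \<le> Max L" using finL by simp
      moreover have "b \<noteq> Max L" using dd[of j q0 b] j q0 lf by auto
      ultimately show "b < Max L" by simp
    qed
    have "q0 \<in> Q1" unfolding Q1_def okq_def using q0 lf mx by auto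
    moreover have "Q1 \<subseteq> {q0}"
    proof
      fix q1 assume "q1 \<in> Q1"
      then obtain a1 where a1: "q1 < Suc n" "f ! q1 = Some a1"
        "\<forall>k<length f. k \<noteq> q1 \<longrightarrow> (\<forall>b. f ! k = Some b \<longrightarrow> b < a1)"
        unfolding Q1_def okq_def using lf by auto
      show "q1 \<in> {q0}"
      proof (rule ccontr)
        assume "q1 \<notin> {q0}"
        then have "Max L < a1" using a1(3) q0 lf by auto
        moreover have "a1 \<in> L" unfolding L_def using a1 by auto
        then have "a1 \<le> Max L" using finL by simp
        ultimately show False by simp
      qed
    qed
    ultimately have "Q1 = {q0}" by blast
    then show ?thesis by simp
  qed
  have "card {\<pi>. consist f \<pi>} * fact k = (\<Sum>q\<in>Q0. card (A q) * fact k) + (\<Sum>q\<in>Q1. card (A q) * fact k)"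
    using cC by (simp add: sum_distrib_right add_mult_distrib)
  also have "\<dots> = (\<Sum>q\<in>Q0. fact n) + (\<Sum>q\<in>Q1. k * fact n)"
    using s0 s1 by simp
  also have "\<dots> = cnt * fact n + card Q1 * k * fact n" using cQ0 by simp
  also have "\<dots> = (cnt + k) * fact n" using cQ1 by (simp only: add_mult_distrib)
  also have "\<dots> = fact (Suc n)" unfolding k_def using cnt_le by simp
  finally show ?case unfolding k_def cnt_def lf by simp
qed



lemma negcancel:
  fixes N a y x :: nat
  assumes "(a + y) mod N = 0" "(y + x) mod N = 0"
  shows "a mod N = x mod N"
proof -
  have "(a + (y + x)) mod N = (a + (y + x) mod N) mod N" by (simp add: mod_add_right_eq)
  then have 1: "(a + (y + x)) mod N = a mod N" using assms(2) by simp
  have "((a + y) + x) mod N = ((a + y) mod N + x) mod N" by (simp add: mod_add_left_eq)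
  then have 2: "((a + y) + x) mod N = x mod N" using assms(1) by simp
  show ?thesis using 1 2 by (simp add: add.assoc)
qed

lemma sq_inv:
  fixes N x :: nat
  assumes "N > 0"
  shows "((N - 1) * ((N - 1) * x)) mod N = x mod N"
proof (rule negcancel[where y="(N - 1) * x"])
  have "(N - 1) * ((N - 1) * x) + (N - 1) * x = N * ((N - 1) * x)"
    using assms by (cases N) (auto simp: algebra_simps)
  then show "((N - 1) * ((N - 1) * x) + (N - 1) * x) mod N = 0" by simp
  have "(N - 1) * x + x = N * x" using assms by (cases N) (auto simp: algebra_simps)
  then show "((N - 1) * x + x) mod N = 0" by simp
qed

lemma ucycle_facts:
  assumes uc: "ucycle n u"
  shows "length u \<ge> n"
    and "\<And>i j1 j2 a. i < length u \<Longrightarrow> j1 < n \<Longrightarrow> j2 < n \<Longrightarrow> j1 \<noteq> j2 \<Longrightarrow> cfactor u i n ! j1 = Some a \<Longrightarrow> cfactor u i n ! j2 \<noteq> Some a"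
    and "\<And>\<pi>. \<pi> \<in> nperms n \<Longrightarrow> \<exists>!i. i < length u \<and> covers (cfactor u i n) \<pi>"
  using uc unfolding ucycle_def by blast+

lemma nperms_ne: "[1..<Suc n] \<in> nperms n"
proof -
  have "set [1..<Suc n] = {1..<Suc n}" by (rule set_upt)
  also have "\<dots> = {1..n}" by (rule atLeastLessThanSuc_atLeastAtMost)
  finally have "set [1..<Suc n] = {1..n}" .
  then show ?thesis unfolding nperms_def using distinct_upt by blast
qed

lemma cf_len[simp]: "length (cfactor u i n) = n"
  by (simp add: cfactor_def)

lemma cf_nth: "j < n \<Longrightarrow> cfactor u i n ! j = u ! ((i + j) mod length u)"
  by (simp add: cfactor_def)

lemma cf_mod:
  assumes "i mod length u = i' mod length u"
  shows "cfactor u i n = cfactor u i' n"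
proof (rule nth_equalityI)
  show "length (cfactor u i n) = length (cfactor u i' n)" by simp
  fix j assume "j < length (cfactor u i n)"
  then have j: "j < n" by simp
  have "(i + j) mod length u = (i' + j) mod length u"
    using assms by (metis mod_add_left_eq)
  then show "cfactor u i n ! j = cfactor u i' n ! j" using j by (simp add: cf_nth)
qed

lemma period_one:
  assumes uc: "ucycle n u" and n1: "1 \<le> n"
    and h0: "u ! (p mod length u) = None"
  shows "u ! ((p + n) mod length u) = None"
proof (rule ccontr)
  let ?N = "length u"
  let ?W = "\<lambda>i. cfactor u i n"
  assume "u ! ((p + n) mod ?N) \<noteq> None"
  then obtain y where y: "u ! ((p + n) mod ?N) = Some y" by auto
  have Npos: "?N > 0" using ucycle_facts(3)[OF uc nperms_ne] by auto
  have dist: "\<And>i j k a. j < n \<Longrightarrow> k < n \<Longrightarrow> j \<noteq> k \<Longrightarrow> ?W i ! j = Some a \<Longrightarrow> ?W i ! k \<noteq> Some a"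
  proof -
    fix i j k a assume h: "j < n" "k < n" "j \<noteq> k" "?W i ! j = Some a"
    have e: "?W i = ?W (i mod ?N)" by (rule cf_mod) simp
    show "?W i ! k \<noteq> Some a"
      using ucycle_facts(2)[OF uc, of "i mod ?N" j k a] h e Npos by simp
  qed
  have uq: "?W (a + m) = ?W (b + m)" if "\<pi> \<in> nperms n" "covers (?W a) \<pi>" "covers (?W b) \<pi>" for \<pi> a b m
  proof -
    have ea: "?W a = ?W (a mod ?N)" by (rule cf_mod) simp
    have eb: "?W b = ?W (b mod ?N)" by (rule cf_mod) simp
    have "a mod ?N = b mod ?N"
      using ucycle_facts(3)[OF uc that(1)] that(2,3) ea eb Npos by (metis mod_less_divisor)
    then show ?thesis by (intro cf_mod) (metis mod_add_left_eq)
  qed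
  have ex: "\<exists>i. covers (?W i) \<pi>" if "\<pi> \<in> nperms n" for \<pi>
    using ucycle_facts(3)[OF uc that] by blast
  have pred: "\<exists>i'. ?W (Suc i') = ?W i" for i
  proof
    show "?W (Suc (i + ?N - 1)) = ?W i" using Npos by (intro cf_mod) simp
  qed
  have shift: "?W (Suc i) ! j = ?W i ! Suc j" if "Suc j < n" for i j
    using that by (simp add: cf_nth)
  have a0: "?W p ! 0 = None" using h0 n1 by (simp add: cf_nth)
  have a1: "?W (Suc p) ! (n - 1) = Some y" using y n1 by (simp add: cf_nth)
  show False
    by (rule core[of n ?W, OF n1 cf_len shift dist ex uq pred a0 a1])
qed

lemma period_two:
  assumes uc: "ucycle n u" and n1: "1 \<le> n"
    and h1: "u ! ((p + n) mod length u) = None"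
  shows "u ! (p mod length u) = None"
proof (rule ccontr)
  let ?N = "length u"
  let ?W = "\<lambda>i. cfactor u i n"
  let ?V = "\<lambda>i. rev (cfactor u ((?N - 1) * i) n)"
  assume "u ! (p mod ?N) \<noteq> None"
  then obtain y where y: "u ! (p mod ?N) = Some y" by auto
  have Npos: "?N > 0" using ucycle_facts(3)[OF uc nperms_ne] by auto
  have Vnth: "?V i ! j = u ! (((?N - 1) * i + (n - Suc j)) mod ?N)" if "j < n" for i j
    using that by (simp add: rev_nth cf_nth)
  have Vlen: "length (?V i) = n" for i by simp
  have distW: "\<And>i j k a. j < n \<Longrightarrow> k < n \<Longrightarrow> j \<noteq> k \<Longrightarrow> ?W i ! j = Some a \<Longrightarrow> ?W i ! k \<noteq> Some a"
  proof -
    fix i j k a assume h: "j < n" "k < n" "j \<noteq> k" "?W i ! j = Some a"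
    have e: "?W i = ?W (i mod ?N)" by (rule cf_mod) simp
    show "?W i ! k \<noteq> Some a"
      using ucycle_facts(2)[OF uc, of "i mod ?N" j k a] h e Npos by simp
  qed
  have dist: "\<And>i j k a. j < n \<Longrightarrow> k < n \<Longrightarrow> j \<noteq> k \<Longrightarrow> ?V i ! j = Some a \<Longrightarrow> ?V i ! k \<noteq> Some a"
  proof -
    fix i j k a assume h: "j < n" "k < n" "j \<noteq> k" "?V i ! j = Some a"
    have "?W ((?N - 1) * i) ! (n - Suc j) = Some a" using h by (simp add: rev_nth)
    moreover have "n - Suc j < n" "n - Suc k < n" "n - Suc j \<noteq> n - Suc k" using h by auto
    ultimately have "?W ((?N - 1) * i) ! (n - Suc k) \<noteq> Some a" using distW by blast
    then show "?V i ! k \<noteq> Some a" using h by (simp add: rev_nth)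
  qed
  have uqW: "a mod ?N = b mod ?N" if "\<pi> \<in> nperms n" "covers (?W a) \<pi>" "covers (?W b) \<pi>" for \<pi> a b
  proof -
    have ea: "?W a = ?W (a mod ?N)" by (rule cf_mod) simp
    have eb: "?W b = ?W (b mod ?N)" by (rule cf_mod) simp
    show "a mod ?N = b mod ?N"
      using ucycle_facts(3)[OF uc that(1)] that(2,3) ea eb Npos by (metis mod_less_divisor)
  qed
  have uq: "?V (a + m) = ?V (b + m)" if "\<pi> \<in> nperms n" "covers (?V a) \<pi>" "covers (?V b) \<pi>" for \<pi> a b m
  proof -
    have "rev \<pi> \<in> nperms n" using that(1) by (rule nperms_rev)
    moreover have "covers (?W ((?N - 1) * a)) (rev \<pi>)" using that(2) covers_rev by blast
    moreover have "covers (?W ((?N - 1) * b)) (rev \<pi>)" using that(3) covers_rev by blast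
    ultimately have e: "((?N - 1) * a) mod ?N = ((?N - 1) * b) mod ?N" by (rule uqW)
    have "((?N - 1) * a + (?N - 1) * m) mod ?N = ((?N - 1) * b + (?N - 1) * m) mod ?N"
      using e by (metis mod_add_left_eq)
    then have "((?N - 1) * (a + m)) mod ?N = ((?N - 1) * (b + m)) mod ?N"
      by (simp add: add_mult_distrib2)
    then show ?thesis using cf_mod by metis
  qed
  have ex: "\<exists>i. covers (?V i) \<pi>" if pn: "\<pi> \<in> nperms n" for \<pi>
  proof -
    obtain i where ci: "covers (?W i) (rev \<pi>)" using ucycle_facts(3)[OF uc nperms_rev[OF pn]] by blast
    have "?W ((?N - 1) * ((?N - 1) * i)) = ?W i" by (rule cf_mod) (rule sq_inv[OF Npos])
    then have "covers (?W ((?N - 1) * ((?N - 1) * i))) (rev \<pi>)" using ci by simp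
    then have "covers (?V ((?N - 1) * i)) \<pi>" using covers_rev by blast
    then show ?thesis by blast
  qed
  have pred: "\<exists>i'. ?V (Suc i') = ?V i" for i
  proof
    have "Suc (i + ?N - 1) = i + ?N" using Npos by simp
    then have "(?N - 1) * Suc (i + ?N - 1) = (?N - 1) * i + (?N - 1) * ?N" by (simp add: add_mult_distrib2)
    then have "((?N - 1) * Suc (i + ?N - 1)) mod ?N = ((?N - 1) * i) mod ?N" by simp
    then show "?V (Suc (i + ?N - 1)) = ?V i" using cf_mod by metis
  qed
  have shift: "?V (Suc i) ! j = ?V i ! Suc j" if "Suc j < n" for i j
  proof -
    have x1: "?V (Suc i) ! j = u ! (((?N - 1) * Suc i + (n - Suc j)) mod ?N)" by (rule Vnth[of j "Suc i"]) (use that in simp)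
    have x2: "?V i ! Suc j = u ! (((?N - 1) * i + (n - Suc (Suc j))) mod ?N)" by (rule Vnth[of "Suc j" i]) (use that in simp)
    have x3: "(?N - 1) * Suc i + (n - Suc j) = ((?N - 1) * i + (n - Suc (Suc j))) + ?N"
    proof -
      have e1: "(?N - 1) * Suc i = (?N - 1) * i + (?N - 1)" by simp
      have e2: "n - Suc j = Suc (n - Suc (Suc j))" using that by simp
      have e3: "?N - 1 + 1 = ?N" using Npos by simp
      show ?thesis unfolding e1 e2 using e3 by linarith
    qed
    have "((?N - 1) * Suc i + (n - Suc j)) mod ?N = ((?N - 1) * i + (n - Suc (Suc j))) mod ?N"
      unfolding x3 by (rule mod_add_self2)
    then show ?thesis by (simp only: x1 x2)
  qed
  define i where "i = (?N - 1) * Suc p"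
  have c1: "((?N - 1) * i) mod ?N = Suc p mod ?N" unfolding i_def by (rule sq_inv[OF Npos])
  have a0: "?V i ! 0 = None"
  proof -
    have "?V i ! 0 = u ! (((?N - 1) * i + (n - 1)) mod ?N)" using Vnth[of 0 i] n1 by simp
    also have "((?N - 1) * i + (n - 1)) mod ?N = (Suc p + (n - 1)) mod ?N"
      using c1 by (metis mod_add_left_eq)
    also have "Suc p + (n - 1) = p + n" using n1 by simp
    finally show ?thesis using h1 by simp
  qed
  have a1: "?V (Suc i) ! (n - 1) = Some y"
  proof -
    have "?V (Suc i) ! (n - 1) = u ! (((?N - 1) * Suc i + 0) mod ?N)" using Vnth[of "n - 1" "Suc i"] n1 by simp
    also have "(?N - 1) * Suc i + 0 = (?N - 1) * i + (?N - 1)" by simp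
    also have "((?N - 1) * i + (?N - 1)) mod ?N = (Suc p + (?N - 1)) mod ?N"
      using c1 by (metis mod_add_left_eq)
    also have "Suc p + (?N - 1) = p + ?N" using Npos by simp
    finally show ?thesis using y by simp
  qed
  show False
    by (rule core[of n ?V, OF n1 Vlen shift dist ex uq pred a0 a1])
qed

lemma period:
  assumes uc: "ucycle n u"
  shows "u ! (p mod length u) = None \<longleftrightarrow> u ! ((p + n) mod length u) = None"
proof (cases "n = 0")
  case True then show ?thesis by simp
next
  case False
  then have "1 \<le> n" by simp
  then show ?thesis using period_one[OF uc] period_two[OF uc] by blast
qed



lemma count_map_upt: "count_list (map h [0..<m]) x = (\<Sum>j<m. if h j = x then 1 else 0)"
  by (induction m) auto

lemma sum_shift_const:
  fixes d :: "nat \<Rightarrow> nat"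
  assumes per: "\<And>p. d (p + n) = d p"
  shows "(\<Sum>j<n. d (i + j)) = (\<Sum>j<n. d j)"
proof (induction i)
  case 0 then show ?case by simp
next
  case (Suc i)
  have "(\<Sum>j<Suc n. d (i + j)) = d (i + 0) + (\<Sum>j<n. d (i + Suc j))"
    by (rule sum.lessThan_Suc_shift)
  moreover have "(\<Sum>j<Suc n. d (i + j)) = (\<Sum>j<n. d (i + j)) + d (i + n)"
    by (rule sum.lessThan_Suc)
  moreover have "d (i + n) = d (i + 0)" using per[of i] by simp
  ultimately have "(\<Sum>j<n. d (i + Suc j)) = (\<Sum>j<n. d (i + j))" by simp
  then show ?case using Suc by simp
qed

lemma iter_per:
  fixes d :: "nat \<Rightarrow> nat"
  assumes per: "\<And>p. d (p + c) = d p"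
  shows "d (p + c * m) = d p"
proof (induction m)
  case 0 then show ?case by simp
next
  case (Suc m)
  have "d (p + c * Suc m) = d ((p + c * m) + c)" by (simp add: algebra_simps)
  also have "\<dots> = d (p + c * m)" by (rule per)
  finally show ?case using Suc by simp
qed

lemma sum_blocks:
  fixes d :: "nat \<Rightarrow> nat"
  assumes per: "\<And>p. d (p + c) = d p"
  shows "(\<Sum>j<c * m. d j) = m * (\<Sum>j<c. d j)"
proof (induction m)
  case 0 then show ?case by simp
next
  case (Suc m)
  have split: "(\<Sum>j<a + b. d j) = (\<Sum>j<a. d j) + (\<Sum>j<b. d (a + j))" for a b
  proof (induction b)
    case 0 then show ?case by simp
  next
    case (Suc b) then show ?case by simp
  qed
  have "(\<Sum>j<c * Suc m. d j) = (\<Sum>j<c * m + c. d j)" by (simp add: algebra_simps)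
  also have "\<dots> = (\<Sum>j<c * m. d j) + (\<Sum>j<c. d (c * m + j))" by (rule split)
  also have "(\<Sum>j<c. d (c * m + j)) = (\<Sum>j<c. d j)"
  proof (rule sum.cong)
    fix j show "d (c * m + j) = d j" using iter_per[where d=d and c=c and p=j and m=m, OF per] by (simp add: add.commute)
  qed simp
  finally show ?case using Suc by simp
qed

lemma card_nperms: "card (nperms n) = fact n"
proof -
  let ?f = "replicate n (None :: nat option)"
  have d: "distl ?f" unfolding distl_def by simp
  have e: "{\<pi>. consist ?f \<pi>} = nperms n"
  proof
    show "{\<pi>. consist ?f \<pi>} \<subseteq> nperms n" using consist_perm by fastforce
    show "nperms n \<subseteq> {\<pi>. consist ?f \<pi>}"
    proof
      fix \<pi> assume "\<pi> \<in> nperms n"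
      then have "consist ?f \<pi>" by (intro consistI) auto
      then show "\<pi> \<in> {\<pi>. consist ?f \<pi>}" by simp
    qed
  qed
  have "count_list ?f None = n" by (induction n) auto
  then show ?thesis using count_main[of ?f n] d e by simp
qed

theorem corollary1:
  fixes n k :: nat and u :: "nat option list"
  assumes "ucycle n u"
    and "k \<le> n"
    and "diamondicity n u = n - k"
  shows "length u = fact k \<and>
         (\<forall>i. u ! (i mod length u) = None \<longleftrightarrow>
              u ! ((i + gcd n (length u)) mod length u) = None) \<and>
         (n div gcd n (length u)) dvd (n - k) \<and>
         (1 \<le> k \<and> k \<le> n - 1 \<longrightarrow> gcd n (length u) \<noteq> 1)"
proof -
  note uc = assms(1)
  define N where "N = length u"
  define c where "c = gcd n N"
  define d where "d = (\<lambda>p. if u ! (p mod N) = None then 1 else (0::nat))"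
  have Npos: "N > 0" unfolding N_def using ucycle_facts(3)[OF uc nperms_ne] by auto
  have perN: "d (p + N) = d p" for p unfolding d_def by simp
  have pern: "d (p + n) = d p" for p unfolding d_def N_def using period[OF uc, of p] by simp
  have cnt: "count_list (cfactor u i n) None = (\<Sum>j<n. d (i + j))" for i
    unfolding cfactor_def count_map_upt d_def N_def by simp
  have cnt_all: "count_list (cfactor u i n) None = n - k" for i
  proof -
    have "count_list (cfactor u i n) None = (\<Sum>j<n. d j)"
      using cnt sum_shift_const[of d n i, OF pern] by simp
    also have "\<dots> = count_list (cfactor u 0 n) None" using cnt[of 0] by simp
    also have "\<dots> = n - k" using assms(3) unfolding diamondicity_def .
    finally show ?thesis .
  qed
  define C where "C = (\<lambda>i. {\<pi>. covers (cfactor u i n) \<pi>})"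
  have cardC: "card (C i) * fact k = fact n" if "i < N" for i
  proof -
    have dl: "distl (cfactor u i n)" unfolding distl_def
      using ucycle_facts(2)[OF uc, of i] that unfolding N_def by auto
    have "n - count_list (cfactor u i n) None = k" using cnt_all assms(2) by simp
    moreover have "C i = {\<pi>. consist (cfactor u i n) \<pi>}" unfolding C_def using covers_iff by blast
    ultimately show ?thesis using count_main[of "cfactor u i n" n] dl by simp
  qed
  have union: "nperms n = (\<Union>i\<in>{..<N}. C i)"
  proof
    show "nperms n \<subseteq> (\<Union>i\<in>{..<N}. C i)"
    proof
      fix \<pi> assume "\<pi> \<in> nperms n"
      then obtain i where "i < N" "covers (cfactor u i n) \<pi>"
        using ucycle_facts(3)[OF uc] unfolding N_def by blast
      then show "\<pi> \<in> (\<Union>i\<in>{..<N}. C i)" unfolding C_def by blast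
    qed
    show "(\<Union>i\<in>{..<N}. C i) \<subseteq> nperms n"
      unfolding C_def using covers_perm by fastforce
  qed
  have disj: "\<forall>i\<in>{..<N}. \<forall>j\<in>{..<N}. i \<noteq> j \<longrightarrow> C i \<inter> C j = {}"
  proof (intro ballI impI)
    fix i j assume i: "i \<in> {..<N}" and j: "j \<in> {..<N}" and ne: "i \<noteq> j"
    show "C i \<inter> C j = {}"
    proof (rule ccontr)
      assume "C i \<inter> C j \<noteq> {}"
      then obtain \<pi> where ci: "covers (cfactor u i n) \<pi>" and cj: "covers (cfactor u j n) \<pi>"
        unfolding C_def by blast
      have "\<pi> \<in> nperms n" using covers_perm[OF ci] by simp
      then show False using ucycle_facts(3)[OF uc] ci cj i j ne unfolding N_def by blast
    qed
  qed
  have finC: "\<forall>i\<in>{..<N}. finite (C i)"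
  proof
    fix i
    have "C i = {\<pi>. consist (cfactor u i n) \<pi>}" unfolding C_def using covers_iff by blast
    then show "finite (C i)" using consist_finite by simp
  qed
  have "fact n = card (\<Union>i\<in>{..<N}. C i)" unfolding union[symmetric] by (rule card_nperms[symmetric])
  also have "\<dots> = (\<Sum>i<N. card (C i))" by (rule card_UN_disjoint[OF _ finC disj]) simp
  also have "\<dots> = (\<Sum>i<N. card (C 0))"
  proof (rule sum.cong)
    fix i assume "i \<in> {..<N}"
    then have "card (C i) * fact k = card (C 0) * fact k" using cardC Npos by simp
    then show "card (C i) = card (C 0)" by simp
  qed simp
  finally have fn: "fact n = N * card (C 0)" by simp
  have c0: "card (C 0) * fact k = fact n" using cardC[OF Npos] .
  have pos: "card (C 0) > 0"
  proof (rule ccontr)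
    assume "\<not> card (C 0) > 0"
    then have "(fact n :: nat) = 0" using fn by simp
    then show False by simp
  qed
  have e1: "card (C 0) * fact k = N * card (C 0)" using trans[OF c0 fn] .
  have e2: "card (C 0) * fact k = card (C 0) * N" using e1 by (simp only: mult.commute)
  have "fact k = N" using mult_left_cancel[of "card (C 0)" "fact k" N] e2 pos by simp
  then have part1: "N = fact k" by simp
  have perc: "d (p + c) = d p" for p
  proof (cases "n = 0")
    case True then show ?thesis unfolding c_def using perN by simp
  next
    case False
    then obtain x y where xy: "n * x = N * y + c" unfolding c_def using bezout_nat by blast
    have "d p = d (p + n * x)" using iter_per[of d n, OF pern] by simp
    also have "\<dots> = d ((p + c) + N * y)" using xy by (simp add: algebra_simps)
    also have "\<dots> = d (p + c)" using iter_per[of d N, OF perN] by simp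
    finally show ?thesis by simp
  qed
  have part2: "\<forall>i. u ! (i mod N) = None \<longleftrightarrow> u ! ((i + c) mod N) = None"
  proof
    fix i
    have "d (i + c) = d i" by (rule perc)
    then show "u ! (i mod N) = None \<longleftrightarrow> u ! ((i + c) mod N) = None"
      unfolding d_def by (auto split: if_splits)
  qed
  have cdvd: "c dvd n" unfolding c_def by simp
  have "n - k = count_list (cfactor u 0 n) None" using cnt_all by simp
  also have "\<dots> = (\<Sum>j<n. d j)" using cnt[of 0] by simp
  also have "n = c * (n div c)" using cdvd by simp
  then have "(\<Sum>j<n. d j) = (\<Sum>j<c * (n div c). d j)" by simp
  also have "\<dots> = (n div c) * (\<Sum>j<c. d j)" by (rule sum_blocks[where d=d and c=c, OF perc])
  finally have part3: "(n div c) dvd (n - k)" by simp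
  have part4: "1 \<le> k \<and> k \<le> n - 1 \<longrightarrow> c \<noteq> 1"
  proof (intro impI notI)
    assume h: "1 \<le> k \<and> k \<le> n - 1" and c1: "c = 1"
    then have "n dvd (n - k)" using part3 by simp
    moreover have "0 < n - k" "n - k < n" using h by auto
    ultimately show False by (meson nat_dvd_not_less)
  qed
  show ?thesis using part1 part2 part3 part4 unfolding N_def c_def by blast
qed

end
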